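(* Let $C$ be a convex subset of a real topological vector space $X$. Then: (i) $\operatorname{fri} C$ is a convex subset of $C$; (ii) for every $x\in\operatorname{fri} C$ and every $y\in C$, the half-open segment $[x,y)=\{(1-t)x+ty: t\in[0,1)\}$ is contained in $\operatorname{fri} C$; (iii) if $\operatorname{fri} C\neq\emptyset$, then $\overline{C}=\overline{\operatorname{fri} C}$; (iv) $\operatorname{fri}(\operatorname{fri} C)=\operatorname{fri} C$.
   Context: For a convex set $C$, a convex subset $F\subseteq C$ is a face of $C$ if for every $x\in F$ and all $y,z\in C$ with $x\in(y,z)=\{(1-t)y+tz:t\in(0,1)\}$ we have $y,z\in F$; $F_{\min}(x,C)$ is the intersection of all faces of $C$ containing $x\in C$. The face relative interior is $\operatorname{fri} C=\{x\in C: C\subseteq\overline{F_{\min}(x,C)}\}$. *)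

theory Defs
  imports "HOL-Analysis.Analysis"
begin

definition F_min :: "'a::real_vector \<Rightarrow> 'a set \<Rightarrow> 'a set" where
  "F_min x C = \<Inter> {F. F face_of C \<and> x \<in> F}"

definition fri :: "'a::{real_vector,topological_space} set \<Rightarrow> 'a set" where
  "fri C = {x \<in> C. C \<subseteq> closure (F_min x C)}"

end

theory Submission
  imports Defs
begin

definition LL :: "'a::real_vector \<Rightarrow> 'a set \<Rightarrow> 'a set" where
  "LL x C = {y \<in> C. \<exists>e>0. x + e *\<^sub>R (x - y) \<in> C}"

lemma Fmin_face:
  assumes "convex C" "x \<in> C"
  shows "F_min x C face_of C" "x \<in> F_min x C"
proof -
  have "{F. F face_of C \<and> x \<in> F} \<noteq> {}" using assms face_of_refl by blast
  then show "F_min x C face_of C" unfolding F_min_def by (rule face_of_Inter) auto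
  show "x \<in> F_min x C" unfolding F_min_def by auto
qed

lemma Fmin_least: "F face_of C \<Longrightarrow> x \<in> F \<Longrightarrow> F_min x C \<subseteq> F"
  unfolding F_min_def by auto

lemma seg_Fmin:
  fixes C :: "'a::real_vector set"
  assumes "convex C" "x \<in> C" "y \<in> C" "0 \<le> t" "t < 1"
  shows "x \<in> F_min ((1 - t) *\<^sub>R x + t *\<^sub>R y) C"
proof (cases "t = 0 \<or> x = y")
  case True
  then have "(1 - t) *\<^sub>R x + t *\<^sub>R y = x" by (auto simp: algebra_simps)
  then show ?thesis using Fmin_face(2)[OF assms(1,2)] by simp
next
  case False
  let ?w = "(1 - t) *\<^sub>R x + t *\<^sub>R y"
  have wC: "?w \<in> C" using assms convexD[OF assms(1) assms(2) assms(3), of "1-t" t] by simp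
  have "?w \<in> open_segment x y" using False assms by (auto simp: in_segment intro!: exI[of _ t])
  then show ?thesis using Fmin_face[OF assms(1) wC] assms(2,3) unfolding face_of_def by blast
qed

lemma fri_seg:
  fixes C :: "'a::{real_vector,topological_space} set"
  assumes "convex C" "x \<in> fri C" "y \<in> C" "0 \<le> t" "t < 1"
  shows "(1 - t) *\<^sub>R x + t *\<^sub>R y \<in> fri C"
proof -
  let ?w = "(1 - t) *\<^sub>R x + t *\<^sub>R y"
  have xC: "x \<in> C" and cl: "C \<subseteq> closure (F_min x C)" using assms(2) by (auto simp: fri_def)
  have wC: "?w \<in> C" using assms xC convexD[OF assms(1) xC assms(3), of "1-t" t] by simp
  have "F_min x C \<subseteq> F_min ?w C"
    using Fmin_least[OF Fmin_face(1)[OF assms(1) wC] seg_Fmin[OF assms(1) xC assms(3-5)]] .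
  then have "closure (F_min x C) \<subseteq> closure (F_min ?w C)" by (rule closure_mono)
  then show ?thesis using cl wC by (auto simp: fri_def)
qed

lemma LL_sub: "y \<in> LL x C \<Longrightarrow> F face_of C \<Longrightarrow> x \<in> F \<Longrightarrow> y \<in> F"
proof -
  assume y: "y \<in> LL x C" and F: "F face_of C" and xF: "x \<in> F"
  then obtain e where e: "e > 0" and z: "x + e *\<^sub>R (x - y) \<in> C" and yC: "y \<in> C"
    by (auto simp: LL_def)
  show "y \<in> F"
  proof (cases "y = x")
    case True then show ?thesis using xF by simp
  next
    case False
    let ?z = "x + e *\<^sub>R (x - y)"
    have ne: "y \<noteq> ?z"
    proof
      assume "y = ?z"
      then have "(1+e) *\<^sub>R (x - y) = 0" by (simp add: algebra_simps)
      then show False using e False by simp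
    qed
    define u where "u = 1/(1+e)"
    have u1: "u * (1+e) = 1" and u0: "0 < u" and u2: "u < 1" using e by (auto simp: u_def field_simps)
    have "(1 - u) *\<^sub>R y + u *\<^sub>R ?z = (1 - u*(1+e)) *\<^sub>R y + (u*(1+e)) *\<^sub>R x"
      by (simp add: algebra_simps)
    also have "\<dots> = x" using u1 by simp
    finally have xeq: "x = (1 - u) *\<^sub>R y + u *\<^sub>R ?z" by simp
    then have "x \<in> open_segment y ?z" using ne u0 u2 unfolding in_segment by blast
    then show ?thesis using F xF yC z unfolding face_of_def by blast
  qed
qed


lemma shrink:
  fixes C :: "'a::real_vector set"
  assumes "convex C" "x \<in> C" "x + e1 *\<^sub>R (x - y) \<in> C" "0 < e" "e \<le> e1"
  shows "x + e *\<^sub>R (x - y) \<in> C"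
proof -
  define a where "a = e / e1"
  have a0: "0 \<le> a" "a \<le> 1" and ae: "a * e1 = e" using assms by (auto simp: a_def field_simps)
  have "(1 - a) *\<^sub>R x + a *\<^sub>R (x + e1 *\<^sub>R (x - y)) \<in> C"
    using convexD[OF assms(1) assms(2) assms(3), of "1-a" a] a0 by simp
  also have "(1 - a) *\<^sub>R x + a *\<^sub>R (x + e1 *\<^sub>R (x - y)) = x + (a * e1) *\<^sub>R (x - y)"
    by (simp add: algebra_simps)
  finally show ?thesis using ae by simp
qed

lemma LL_face_a:
  fixes C :: "'a::real_vector set"
  assumes "convex C" "x \<in> C" "a \<in> C" "b \<in> C" "w \<in> LL x C" "w = (1 - s) *\<^sub>R a + s *\<^sub>R b"
    "0 < s" "s < 1"
  shows "a \<in> LL x C"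
proof -
  obtain e where e: "e > 0" and z: "x + e *\<^sub>R (x - w) \<in> C" using assms(5) by (auto simp: LL_def)
  define al where "al = 1 / (1 + e * s)"
  have es: "0 < e * s" using e assms by simp
  have al0: "0 \<le> al" "al \<le> 1" and al1: "1 - al = al * e * s" using es by (auto simp: al_def field_simps)
  define d where "d = al * e * (1 - s)"
  have es1: "0 < 1 + e * s" using es by linarith
  have d0: "d > 0" using e assms es1 by (auto simp: d_def al_def intro!: divide_pos_pos mult_pos_pos)
  have d1: "1 + d = al + al * e" using al1 by (simp add: d_def algebra_simps)
  have "al *\<^sub>R (x + e *\<^sub>R (x - w)) + (1 - al) *\<^sub>R b \<in> C"
    using convexD[OF assms(1) z assms(4), of al "1-al"] al0 by simp
  also have "al *\<^sub>R (x + e *\<^sub>R (x - w)) + (1 - al) *\<^sub>R b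
      = (al + al * e) *\<^sub>R x - (al * e * (1 - s)) *\<^sub>R a + ((1 - al) - al * e * s) *\<^sub>R b"
    by (simp add: assms(6) algebra_simps)
  also have "\<dots> = (1 + d) *\<^sub>R x - d *\<^sub>R a" using al1 d1 by (simp add: d_def)
  also have "\<dots> = x + d *\<^sub>R (x - a)" by (simp add: algebra_simps)
  finally show ?thesis using d0 assms(3) by (auto simp: LL_def)
qed

lemma LL_face:
  fixes C :: "'a::real_vector set"
  assumes "convex C" "x \<in> C"
  shows "LL x C face_of C"
  unfolding face_of_def
proof (intro conjI ballI impI)
  show "LL x C \<subseteq> C" by (auto simp: LL_def)
  show "convex (LL x C)"
    unfolding convex_def
  proof (intro ballI allI impI)
    fix y1 y2 :: 'a and u v :: real
    assume y1: "y1 \<in> LL x C" and y2: "y2 \<in> LL x C" and uv: "0 \<le> u" "0 \<le> v" "u + v = 1"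
    obtain e1 where e1: "e1 > 0" "x + e1 *\<^sub>R (x - y1) \<in> C" "y1 \<in> C" using y1 by (auto simp: LL_def)
    obtain e2 where e2: "e2 > 0" "x + e2 *\<^sub>R (x - y2) \<in> C" "y2 \<in> C" using y2 by (auto simp: LL_def)
    define e where "e = min e1 e2"
    have z1: "x + e *\<^sub>R (x - y1) \<in> C" using shrink[OF assms e1(2)] e1 e2 by (auto simp: e_def)
    have z2: "x + e *\<^sub>R (x - y2) \<in> C" using shrink[OF assms e2(2)] e1 e2 by (auto simp: e_def)
    have "u *\<^sub>R (x + e *\<^sub>R (x - y1)) + v *\<^sub>R (x + e *\<^sub>R (x - y2)) \<in> C"
      using convexD[OF assms(1) z1 z2] uv by simp
    also have "u *\<^sub>R (x + e *\<^sub>R (x - y1)) + v *\<^sub>R (x + e *\<^sub>R (x - y2))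
        = (u + v) *\<^sub>R x + e *\<^sub>R ((u + v) *\<^sub>R x - (u *\<^sub>R y1 + v *\<^sub>R y2))"
      by (simp add: algebra_simps)
    finally have "x + e *\<^sub>R (x - (u *\<^sub>R y1 + v *\<^sub>R y2)) \<in> C" using uv by simp
    moreover have "u *\<^sub>R y1 + v *\<^sub>R y2 \<in> C" using convexD[OF assms(1) e1(3) e2(3)] uv by simp
    moreover have "e > 0" using e1 e2 by (simp add: e_def)
    ultimately show "u *\<^sub>R y1 + v *\<^sub>R y2 \<in> LL x C" by (auto simp: LL_def)
  qed
next
  fix a b w assume ab: "a \<in> C" "b \<in> C" and w: "w \<in> LL x C" and ws: "w \<in> open_segment a b"
  then obtain s where s: "0 < s" "s < 1" "w = (1 - s) *\<^sub>R a + s *\<^sub>R b" by (auto simp: in_segment)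
  show "a \<in> LL x C" using LL_face_a[OF assms ab w s(3) s(1,2)] .
  have "w = (1 - (1 - s)) *\<^sub>R b + (1 - s) *\<^sub>R a" using s by (simp add: algebra_simps)
  moreover have "0 < 1 - s" "1 - s < 1" using s by auto
  ultimately show "b \<in> LL x C" using LL_face_a[OF assms ab(2,1) w] by blast
qed

lemma Fmin_LL:
  fixes C :: "'a::real_vector set"
  assumes "convex C" "x \<in> C"
  shows "F_min x C = LL x C"
proof
  have "x \<in> LL x C" using assms by (auto simp: LL_def intro: exI[of _ 1])
  then show "F_min x C \<subseteq> LL x C" using Fmin_least[OF LL_face[OF assms]] by blast
  show "LL x C \<subseteq> F_min x C" using LL_sub Fmin_face[OF assms] by blast
qed


lemma seg_closure:
  fixes x y :: "'a::{real_vector, topological_ab_group_add}"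
  assumes tvs_scaleR: "continuous_on UNIV (\<lambda>p :: real \<times> 'a. fst p *\<^sub>R snd p)"
    and T: "\<And>t. 0 \<le> t \<Longrightarrow> t < 1 \<Longrightarrow> (1 - t) *\<^sub>R x + t *\<^sub>R y \<in> T"
  shows "y \<in> closure T"
proof -
  define g where "g = (\<lambda>t::real. x + t *\<^sub>R (y - x))"
  have geq: "g t = (1 - t) *\<^sub>R x + t *\<^sub>R y" for t by (simp add: g_def algebra_simps)
  have c1: "continuous_on UNIV (\<lambda>t::real. t *\<^sub>R (y - x))"
  proof -
    have "continuous_on UNIV (\<lambda>t::real. (t, y - x))"
      by (intro continuous_on_Pair continuous_on_id continuous_on_const)
    then show ?thesis using continuous_on_compose2[OF tvs_scaleR, of UNIV "\<lambda>t. (t, y - x)"] by simp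
  qed
  have cg: "continuous_on UNIV g" unfolding g_def
    by (intro continuous_on_add continuous_on_const c1)
  have "g ` closure {0..<1} \<subseteq> closure T"
    apply (rule image_closure_subset)
    using cg continuous_on_subset apply blast
     apply simp
    using T closure_subset geq by fastforce
  moreover have "(1::real) \<in> closure {0..<1}" by simp
  ultimately have "g 1 \<in> closure T" by blast
  then show ?thesis by (simp add: geq)
qed

theorem proposition4p1:
  fixes C :: "'a::{real_vector, topological_ab_group_add} set"
  assumes tvs_scaleR: "continuous_on UNIV (\<lambda>p :: real \<times> 'a. fst p *\<^sub>R snd p)"
    and "convex C"
  shows "(convex (fri C) \<and> fri C \<subseteq> C)
       \<and> (\<forall>x \<in> fri C. \<forall>y \<in> C.
            {(1 - t) *\<^sub>R x + t *\<^sub>R y | t. 0 \<le> t \<and> t < 1} \<subseteq> fri C)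
       \<and> (fri C \<noteq> {} \<longrightarrow> closure C = closure (fri C))
       \<and> fri (fri C) = fri C"
proof -
  note cC = assms(2)
  have sub: "fri C \<subseteq> C" by (auto simp: fri_def)
  have seg: "\<forall>x \<in> fri C. \<forall>y \<in> C.
            {(1 - t) *\<^sub>R x + t *\<^sub>R y | t. 0 \<le> t \<and> t < 1} \<subseteq> fri C"
    using fri_seg[OF cC] by blast
  have cvx: "convex (fri C)"
    unfolding convex_def
  proof (intro ballI allI impI)
    fix x y :: 'a and u v :: real
    assume x: "x \<in> fri C" and y: "y \<in> fri C" and uv: "0 \<le> u" "0 \<le> v" "u + v = 1"
    show "u *\<^sub>R x + v *\<^sub>R y \<in> fri C"
    proof (cases "v = 1")
      case True then show ?thesis using uv y by simp
    next
      case False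
      then have "v < 1" using uv by simp
      then have "(1 - v) *\<^sub>R x + v *\<^sub>R y \<in> fri C" using fri_seg[OF cC x _ uv(2)] y sub by blast
      moreover have "u = 1 - v" using uv by simp
      ultimately show ?thesis by simp
    qed
  qed
  have cl: "fri C \<noteq> {} \<longrightarrow> closure C = closure (fri C)"
  proof
    assume "fri C \<noteq> {}"
    then obtain x0 where x0: "x0 \<in> fri C" by blast
    have "C \<subseteq> closure (fri C)"
    proof
      fix y assume "y \<in> C"
      then show "y \<in> closure (fri C)"
        using seg_closure[OF tvs_scaleR, of x0 y "fri C"] fri_seg[OF cC x0] by blast
    qed
    then have "closure C \<subseteq> closure (fri C)" by (simp add: closure_minimal)
    moreover have "closure (fri C) \<subseteq> closure C" using sub by (rule closure_mono)
    ultimately show "closure C = closure (fri C)" by blast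
  qed
  have ff: "fri (fri C) = fri C"
  proof
    show "fri (fri C) \<subseteq> fri C" by (auto simp: fri_def)
    show "fri C \<subseteq> fri (fri C)"
    proof
      fix x assume x: "x \<in> fri C"
      then have xC: "x \<in> C" and cx: "C \<subseteq> closure (F_min x C)" by (auto simp: fri_def)
      have "LL x C \<subseteq> closure (F_min x (fri C))"
      proof
        fix y assume y: "y \<in> LL x C"
        then obtain e where e: "e > 0" and z: "x + e *\<^sub>R (x - y) \<in> C" and yC: "y \<in> C"
          by (auto simp: LL_def)
        show "y \<in> closure (F_min x (fri C))"
        proof (rule seg_closure[OF tvs_scaleR])
          fix t :: real assume t: "0 \<le> t" "t < 1"
          let ?w = "(1 - t) *\<^sub>R x + t *\<^sub>R y"
          have wD: "?w \<in> fri C" using fri_seg[OF cC x yC t] .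
          have "(1 - t/2) *\<^sub>R x + (t/2) *\<^sub>R (x + e *\<^sub>R (x - y)) \<in> fri C"
            using fri_seg[OF cC x z] t by simp
          also have "(1 - t/2) *\<^sub>R x + (t/2) *\<^sub>R (x + e *\<^sub>R (x - y)) = x + (e/2) *\<^sub>R (x - ?w)"
            by (simp add: algebra_simps)
          finally have "?w \<in> LL x (fri C)" using wD e by (auto simp: LL_def intro!: exI[of _ "e/2"])
          then show "?w \<in> F_min x (fri C)"
            using LL_sub Fmin_face[OF cvx x] by blast
        qed
      qed
      then have "closure (LL x C) \<subseteq> closure (F_min x (fri C))"
        by (simp add: closure_minimal)
      then show "x \<in> fri (fri C)"
        using cx Fmin_LL[OF cC xC] sub x by (auto simp: fri_def)
    qed
  qed
  show ?thesis using sub seg cvx cl ff by blast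
qed

end
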